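(* Let $f:[0,1]\to[0,1]$ be a surjective continuous function that does not admit a splitting sequence. If $f$ admits two distinct 2-cycles $\{s,t\}$ and $\{u,v\}$ with $s<t$ and $u<v$, then either $s<u<v<t$ or $u<s<t<v$.
   Context: A 2-cycle is a set $\{s,t\}$ with $s\ne t$, $f(s)=t$, $f(t)=s$. A sequence $(T_n)_{n\in\mathbb N}$ of closed intervals $T_n\subsetneq[0,1]$ (possibly degenerate) is tight if $f(T_{n+1})=T_n$ for every $n$ and $T_n$ is nondegenerate for all sufficiently large $n$. A tight sequence $(T_n)$, $T_n=[l_n,r_n]$, is a splitting sequence admitted by $f$ if there are an infinite set $N\subseteq\mathbb N$ and nondegenerate closed intervals $S_n\subseteq[0,1]$ ($n\in N$) with $S_n\cap T_n\subseteq\{l_n,r_n\}$ and $f(S_n)=f(T_n)$ for all $n\in N$. *)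

theory Defs
  imports "HOL-Analysis.Analysis"
begin

definition two_cycle :: "(real \<Rightarrow> real) \<Rightarrow> real \<Rightarrow> real \<Rightarrow> bool" where
  "two_cycle f s t \<longleftrightarrow> s \<in> {0..1} \<and> t \<in> {0..1} \<and> s \<noteq> t \<and> f s = t \<and> f t = s"

definition tight_seq :: "(real \<Rightarrow> real) \<Rightarrow> (nat \<Rightarrow> real) \<Rightarrow> (nat \<Rightarrow> real) \<Rightarrow> bool" where
  "tight_seq f l r \<longleftrightarrow>
     (\<forall>n. l n \<le> r n \<and> {l n..r n} \<subset> {0..1}) \<and>
     (\<forall>n. f ` {l (Suc n)..r (Suc n)} = {l n..r n}) \<and>
     (\<exists>m. \<forall>n\<ge>m. l n < r n)"

definition splitting_seq :: "(real \<Rightarrow> real) \<Rightarrow> (nat \<Rightarrow> real) \<Rightarrow> (nat \<Rightarrow> real) \<Rightarrow> bool" where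
  "splitting_seq f l r \<longleftrightarrow> tight_seq f l r \<and>
     (\<exists>N :: nat set. infinite N \<and>
        (\<forall>n\<in>N. \<exists>a b. a < b \<and> {a..b} \<subseteq> {0..1} \<and>
            {a..b} \<inter> {l n..r n} \<subseteq> {l n, r n} \<and>
            f ` {a..b} = f ` {l n..r n}))"

definition admits_splitting_seq :: "(real \<Rightarrow> real) \<Rightarrow> bool" where
  "admits_splitting_seq f \<longleftrightarrow> (\<exists>l r. splitting_seq f l r)"

end

theory Submission
  imports Defs
begin

lemma img_between:
  fixes f :: "real \<Rightarrow> real"
  assumes "continuous_on {p..q} f" "p \<le> q"
  shows "{min (f p) (f q)..max (f p) (f q)} \<subseteq> f ` {p..q}"
proof
  fix y assume y: "y \<in> {min (f p) (f q)..max (f p) (f q)}"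
  show "y \<in> f ` {p..q}"
  proof (cases "f p \<le> f q")
    case True
    then obtain x where "p \<le> x" "x \<le> q" "f x = y"
      using IVT'[of f p y q] y assms by auto
    then show ?thesis by auto
  next
    case False
    then obtain x where "p \<le> x" "x \<le> q" "f x = y"
      using IVT2'[of f q y p] y assms by auto
    then show ?thesis by auto
  qed
qed

lemma L1:
  fixes f :: "real \<Rightarrow> real"
  assumes cont: "continuous_on {x..y} f" and xy: "x \<le> y" and fx: "f x = c" and fy: "f y = d"
    and cd: "c \<le> d"
  shows "\<exists>a b. x \<le> a \<and> a \<le> b \<and> b \<le> y \<and> f ` {a..b} = {c..d}"
proof -
  define A where "A = {z \<in> {x..y}. f z = c}"
  have cA: "closed A" unfolding A_def
    by (rule continuous_closed_preimage_constant[OF cont]) simp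
  have neA: "A \<noteq> {}" using xy fx unfolding A_def by auto
  have bA: "bdd_above A" unfolding A_def by (auto intro: bdd_aboveI[of _ y])
  define a where "a = Sup A"
  have aA: "a \<in> A" unfolding a_def using closed_contains_Sup[OF neA bA cA] .
  have aub: "\<And>z. z \<in> A \<Longrightarrow> z \<le> a" unfolding a_def using bA by (simp add: cSup_upper)
  have cont2: "continuous_on {a..y} f" using aA A_def by (auto intro: continuous_on_subset[OF cont])
  define B where "B = {z \<in> {a..y}. f z = d}"
  have cB: "closed B" unfolding B_def
    by (rule continuous_closed_preimage_constant[OF cont2]) simp
  have neB: "B \<noteq> {}" using aA fy unfolding A_def B_def by auto
  have bB: "bdd_below B" unfolding B_def by (auto intro: bdd_belowI[of _ a])
  define b where "b = Inf B"
  have bBm: "b \<in> B" unfolding b_def using closed_contains_Inf[OF neB bB cB] .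
  have blb: "\<And>z. z \<in> B \<Longrightarrow> b \<le> z" unfolding b_def using bB by (simp add: cInf_lower)
  have ab: "a \<le> b" "b \<le> y" "x \<le> a" using bBm aA unfolding A_def B_def by auto
  have fa: "f a = c" and fb: "f b = d" using aA bBm unfolding A_def B_def by auto
  have cont3: "\<And>p q. a \<le> p \<Longrightarrow> q \<le> b \<Longrightarrow> continuous_on {p..q} f"
    using ab by (auto intro: continuous_on_subset[OF cont])
  have "f ` {a..b} = {c..d}"
  proof
    show "{c..d} \<subseteq> f ` {a..b}"
      using img_between[OF cont3[of a b] ab(1)] fa fb cd by auto
  next
    show "f ` {a..b} \<subseteq> {c..d}"
    proof
      fix w assume "w \<in> f ` {a..b}"
      then obtain z where z: "a \<le> z" "z \<le> b" "w = f z" by auto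
      have "c \<le> f z"
      proof (rule ccontr)
        assume "\<not> c \<le> f z"
        then obtain q where q: "z \<le> q" "q \<le> b" "f q = c"
          using IVT'[of f z c b] fb cd z cont3[of z b] by auto
        then have "q \<in> A" using z ab unfolding A_def by auto
        then have "q \<le> a" by (rule aub)
        then have "q = z" "z = a" using q z by auto
        then show False using fa \<open>\<not> c \<le> f z\<close> by simp
      qed
      moreover have "f z \<le> d"
      proof (rule ccontr)
        assume "\<not> f z \<le> d"
        then obtain q where q: "a \<le> q" "q \<le> z" "f q = d"
          using IVT'[of f a d z] fa cd z cont3[of a z] by auto
        then have "q \<in> B" using z ab unfolding B_def by auto
        then have "b \<le> q" by (rule blb)
        then have "q = z" "z = b" using q z by auto
        then show False using fb \<open>\<not> f z \<le> d\<close> by simp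
      qed
      ultimately show "w \<in> {c..d}" using z by simp
    qed
  qed
  then show ?thesis using ab by blast
qed

lemma L:
  fixes f :: "real \<Rightarrow> real"
  assumes cont: "continuous_on {p..q} f" and pq: "p \<le> q" and cd: "c < d"
    and sub: "{c..d} \<subseteq> f ` {p..q}"
  shows "\<exists>a b. p \<le> a \<and> a < b \<and> b \<le> q \<and> f ` {a..b} = {c..d}"
proof -
  obtain x where x: "x \<in> {p..q}" "f x = c" using sub cd by (metis atLeastAtMost_iff imageE order.refl less_imp_le subsetD)
  obtain y where y: "y \<in> {p..q}" "f y = d" using sub cd by (metis atLeastAtMost_iff imageE order.refl less_imp_le subsetD)
  have "\<exists>a b. p \<le> a \<and> a \<le> b \<and> b \<le> q \<and> f ` {a..b} = {c..d}"
  proof (cases "x \<le> y")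
    case True
    have "continuous_on {x..y} f" using x y by (auto intro: continuous_on_subset[OF cont])
    then obtain a b where "x \<le> a" "a \<le> b" "b \<le> y" "f ` {a..b} = {c..d}"
      using L1[of x y f c d] x y cd True by auto
    then show ?thesis using x y by (metis atLeastAtMost_iff order_trans)
  next
    case False
    have c2: "continuous_on {y..x} (\<lambda>z. - f z)"
      using x y False by (auto intro!: continuous_intros intro: continuous_on_subset[OF cont])
    obtain a b where ab: "y \<le> a" "a \<le> b" "b \<le> x" "(\<lambda>z. - f z) ` {a..b} = {-d..-c}"
      using L1[OF c2, of "-d" "-c"] x y cd False by auto
    have "f ` {a..b} = uminus ` ((\<lambda>z. - f z) ` {a..b})" by (simp add: image_image)
    also have "\<dots> = {c..d}" using ab(4) by simp
    finally show ?thesis using ab x y by (metis atLeastAtMost_iff order_trans)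
  qed
  then obtain a b where ab: "p \<le> a" "a \<le> b" "b \<le> q" "f ` {a..b} = {c..d}" by blast
  have "a \<noteq> b"
  proof
    assume "a = b"
    then have "{c..d} = {f a}" using ab by simp
    then show False using cd by (metis atLeastAtMost_singleton_iff less_irrefl)
  qed
  then show ?thesis using ab by force
qed


lemma core:
  fixes f :: "real \<Rightarrow> real" and K :: "(real \<times> real) set"
  assumes Kb: "\<And>c d. (c,d) \<in> K \<Longrightarrow> 0 \<le> c \<and> c < d \<and> d \<le> 1 \<and> \<not> (c = 0 \<and> d = 1)"
    and step: "\<And>c d. (c,d) \<in> K \<Longrightarrow> \<exists>a b. (a,b) \<in> K \<and> f ` {a..b} = {c..d} \<and>
         (\<exists>e g. e < g \<and> {e..g} \<subseteq> {0..1} \<and> {e..g} \<inter> {a..b} \<subseteq> {a,b} \<and> f ` {e..g} = {c..d})"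
    and xstart: "xstart \<in> K"
  shows "admits_splitting_seq f"
proof -
  define Q where "Q = (\<lambda>p q. q \<in> K \<and> f ` {fst q..snd q} = {fst p..snd p} \<and>
         (\<exists>e g. e < g \<and> {e..g} \<subseteq> {0..1} \<and> {e..g} \<inter> {fst q..snd q} \<subseteq> {fst q, snd q} \<and> f ` {e..g} = {fst p..snd p}))"
  define P where "P = (\<lambda>p. SOME q. Q p q)"
  have PQ: "Q p (P p)" if pK: "p \<in> K" for p
  proof -
    obtain c d where p: "p = (c,d)" by force
    obtain a b where "(a,b) \<in> K \<and> f ` {a..b} = {c..d} \<and>
         (\<exists>e g. e < g \<and> {e..g} \<subseteq> {0..1} \<and> {e..g} \<inter> {a..b} \<subseteq> {a,b} \<and> f ` {e..g} = {c..d})"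
      using step[of c d] pK unfolding p by blast
    then have "Q p (a,b)" unfolding Q_def p by simp
    then show ?thesis unfolding P_def by (rule someI)
  qed
  define X where "X = (\<lambda>n. (P ^^ n) xstart)"
  have XK: "X n \<in> K" for n
    by (induction n) (auto simp: X_def xstart PQ[unfolded Q_def])
  have XS: "X (Suc n) = P (X n)" for n by (simp add: X_def)
  define l where "l = (\<lambda>n. fst (X n))"
  define r where "r = (\<lambda>n. snd (X n))"
  have lr: "0 \<le> l n \<and> l n < r n \<and> r n \<le> 1 \<and> \<not> (l n = 0 \<and> r n = 1)" for n
    using Kb[of "l n" "r n"] XK[of n] unfolding l_def r_def by simp
  have QS: "Q (X n) (X (Suc n))" for n using PQ[OF XK[of n]] XS by simp
  have "tight_seq f l r"
    unfolding tight_seq_def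
  proof (intro conjI allI)
    fix n
    show "l n \<le> r n" using lr[of n] by simp
    show "{l n..r n} \<subset> {0..1}"
    proof
      show "{l n..r n} \<subseteq> {0..1}" using lr[of n] by auto
      show "{l n..r n} \<noteq> {0..1}" using lr[of n] by (simp add: Icc_eq_Icc)
    qed
    show "f ` {l (Suc n)..r (Suc n)} = {l n..r n}" using QS[of n] unfolding Q_def l_def r_def by simp
  next
    show "\<exists>m. \<forall>n\<ge>m. l n < r n" using lr by blast
  qed
  moreover have "infinite (range Suc)" by (rule range_inj_infinite) simp
  moreover have "\<forall>n\<in>range Suc. \<exists>a b. a < b \<and> {a..b} \<subseteq> {0..1} \<and>
            {a..b} \<inter> {l n..r n} \<subseteq> {l n, r n} \<and> f ` {a..b} = f ` {l n..r n}"
  proof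
    fix n assume "n \<in> range Suc"
    then obtain m where n: "n = Suc m" by auto
    have "f ` {l n..r n} = {l m..r m}" using QS[of m] unfolding Q_def l_def r_def n by simp
    then show "\<exists>a b. a < b \<and> {a..b} \<subseteq> {0..1} \<and>
            {a..b} \<inter> {l n..r n} \<subseteq> {l n, r n} \<and> f ` {a..b} = f ` {l n..r n}"
      using QS[of m] unfolding Q_def l_def r_def n by simp
  qed
  ultimately show ?thesis unfolding admits_splitting_seq_def splitting_seq_def by blast
qed

lemma case_disj:
  fixes f :: "real \<Rightarrow> real"
  assumes cont: "continuous_on {0..1} f"
    and c1: "two_cycle f s t" and c2: "two_cycle f u v"
    and ord: "s < t" "t < u" "u < v"
  shows "admits_splitting_seq f"
proof (rule core[where K = "{(c,d). s \<le> c \<and> c < d \<and> d \<le> t}" and xstart = "(s,t)"])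
  have r: "0 \<le> s" "v \<le> 1" "f s = t" "f t = s" "f u = v" "f v = u"
    using c1 c2 unfolding two_cycle_def by auto
  have cst: "continuous_on {s..t} f" using r ord by (auto intro: continuous_on_subset[OF cont])
  have ctu: "continuous_on {t..u} f" using r ord by (auto intro: continuous_on_subset[OF cont])
  fix c d assume cd: "(c,d) \<in> {(c,d). s \<le> c \<and> c < d \<and> d \<le> t}"
  show "0 \<le> c \<and> c < d \<and> d \<le> 1 \<and> \<not> (c = 0 \<and> d = 1)" using cd r ord by auto
  have "{c..d} \<subseteq> f ` {s..t}" using img_between[OF cst] ord r cd by auto
  then obtain a b where ab: "s \<le> a" "a < b" "b \<le> t" "f ` {a..b} = {c..d}"
    using L[OF cst _, of c d] ord cd by auto
  have "{c..d} \<subseteq> f ` {t..u}" using img_between[OF ctu] ord r cd by auto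
  then obtain e g where eg: "t \<le> e" "e < g" "g \<le> u" "f ` {e..g} = {c..d}"
    using L[OF ctu _, of c d] ord cd by auto
  have "{e..g} \<inter> {a..b} \<subseteq> {a,b}" using ab eg by auto
  moreover have "{e..g} \<subseteq> {0..1}" using eg r ord by auto
  ultimately show "\<exists>a b. (a,b) \<in> {(c,d). s \<le> c \<and> c < d \<and> d \<le> t} \<and> f ` {a..b} = {c..d} \<and>
         (\<exists>e g. e < g \<and> {e..g} \<subseteq> {0..1} \<and> {e..g} \<inter> {a..b} \<subseteq> {a,b} \<and> f ` {e..g} = {c..d})"
    using ab eg by blast
next
  show "(s,t) \<in> {(c,d). s \<le> c \<and> c < d \<and> d \<le> t}" using ord by auto
qed

lemma case_inter:
  fixes f :: "real \<Rightarrow> real"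
  assumes cont: "continuous_on {0..1} f"
    and c1: "two_cycle f s t" and c2: "two_cycle f u v"
    and ord: "s < u" "u < t" "t < v"
  shows "admits_splitting_seq f"
proof (rule core[where K = "{(c,d). c < d \<and> ((s \<le> c \<and> d \<le> u) \<or> (t \<le> c \<and> d \<le> v))}" and xstart = "(s,u)"])
  have r: "0 \<le> s" "v \<le> 1" "f s = t" "f t = s" "f u = v" "f v = u"
    using c1 c2 unfolding two_cycle_def by auto
  have csu: "continuous_on {s..u} f" using r ord by (auto intro: continuous_on_subset[OF cont])
  have ctv: "continuous_on {t..v} f" using r ord by (auto intro: continuous_on_subset[OF cont])
  have cut: "continuous_on {u..t} f" using r ord by (auto intro: continuous_on_subset[OF cont])
  fix c d assume cd: "(c,d) \<in> {(c,d). c < d \<and> ((s \<le> c \<and> d \<le> u) \<or> (t \<le> c \<and> d \<le> v))}"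
  show "0 \<le> c \<and> c < d \<and> d \<le> 1 \<and> \<not> (c = 0 \<and> d = 1)" using cd r ord by auto
  have "{c..d} \<subseteq> f ` {u..t}" using img_between[OF cut] ord r cd by auto
  then obtain e g where eg: "u \<le> e" "e < g" "g \<le> t" "f ` {e..g} = {c..d}"
    using L[OF cut _, of c d] ord cd by auto
  have eg01: "{e..g} \<subseteq> {0..1}" using eg r ord by auto
  show "\<exists>a b. (a,b) \<in> {(c,d). c < d \<and> ((s \<le> c \<and> d \<le> u) \<or> (t \<le> c \<and> d \<le> v))} \<and> f ` {a..b} = {c..d} \<and>
         (\<exists>e g. e < g \<and> {e..g} \<subseteq> {0..1} \<and> {e..g} \<inter> {a..b} \<subseteq> {a,b} \<and> f ` {e..g} = {c..d})"
  proof (cases "s \<le> c \<and> d \<le> u")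
    case True
    have "{c..d} \<subseteq> f ` {t..v}" using img_between[OF ctv] ord r cd True by auto
    then obtain a b where ab: "t \<le> a" "a < b" "b \<le> v" "f ` {a..b} = {c..d}"
      using L[OF ctv _, of c d] ord cd by auto
    have "{e..g} \<inter> {a..b} \<subseteq> {a,b}" using ab eg by auto
    then show ?thesis using ab eg eg01 by blast
  next
    case False
    then have F: "t \<le> c" "d \<le> v" using cd by auto
    have "{c..d} \<subseteq> f ` {s..u}" using img_between[OF csu] ord r cd F by auto
    then obtain a b where ab: "s \<le> a" "a < b" "b \<le> u" "f ` {a..b} = {c..d}"
      using L[OF csu _, of c d] ord cd by auto
    have "{e..g} \<inter> {a..b} \<subseteq> {a,b}" using ab eg by auto
    then show ?thesis using ab eg eg01 by blast
  qed
next
  show "(s,u) \<in> {(c,d). c < d \<and> ((s \<le> c \<and> d \<le> u) \<or> (t \<le> c \<and> d \<le> v))}" using ord by auto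
qed

theorem lemma3p13:
  fixes f :: "real \<Rightarrow> real" and s t u v :: real
  assumes "continuous_on {0..1} f" and "f ` {0..1} = {0..1}"
    and "\<not> admits_splitting_seq f"
    and "two_cycle f s t" and "two_cycle f u v"
    and "s < t" and "u < v" and "(s, t) \<noteq> (u, v)"
  shows "(s < u \<and> u < v \<and> v < t) \<or> (u < s \<and> s < t \<and> t < v)"
proof -
  have r: "f s = t" "f t = s" "f u = v" "f v = u" using assms(4,5) unfolding two_cycle_def by auto
  have d: "s \<noteq> u" "s \<noteq> v" "t \<noteq> u" "t \<noteq> v" using r assms(6,7,8) by auto
  have "\<not> (t < u)" using case_disj[OF assms(1,4,5)] assms by auto
  moreover have "\<not> (v < s)" using case_disj[OF assms(1,5,4)] assms by auto
  moreover have "\<not> (s < u \<and> u < t \<and> t < v)" using case_inter[OF assms(1,4,5)] assms by auto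
  moreover have "\<not> (u < s \<and> s < v \<and> v < t)" using case_inter[OF assms(1,5,4)] assms by auto
  ultimately show ?thesis using d assms(6,7) by linarith
qed

end
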